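(* Let $\tau:\mathbb N\to\mathbb N$ be defined by $\tau(n)=\lfloor\varphi n+1\rfloor$ if $n\in R_{2,0}$, $\tau(n)=\lfloor\varphi n-1\rfloor$ if $n\in R_{1,0}$, and $\tau(n)=\lfloor(\varphi-1)n+1\rfloor$ if $n\in R_{1,1}$. If $n\in R_{1,0}$, then $\tau(n)\in R_{1,0}$ and $\tau^3(n)=\tau^2(n)+\tau(n)-2$.
   Context: $\mathbb N=\{1,2,\dots\}$, $\varphi=\frac{1+\sqrt5}{2}$, $F$ the Fibonacci numbers ($F(0)=0,F(1)=F(2)=1$). For $i\in\mathbb Z^{\ge0},j\in\mathbb Z$, $R_{i,j}$ is the range of $n\mapsto F(i+1)\lfloor n\varphi\rfloor+F(i)n-j$, $n\in\mathbb N$; the sets $R_{2,0},R_{1,0},R_{1,1}$ partition $\mathbb N$. $\tau^k$ denotes the $k$-fold composition. *)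

theory Defs
  imports Complex_Main "HOL-Number_Theory.Fib"
begin

definition phi :: real where "phi = (1 + sqrt 5) / 2"

definition R :: "nat \<Rightarrow> int \<Rightarrow> int set" where
  "R i j = {int (fib (i+1)) * \<lfloor>real n * phi\<rfloor> + int (fib i) * int n - j | n::nat. n \<ge> 1}"

text \<open>tau on positive naturals; the value at 0 is irrelevant (0 is not in N).\<close>
definition tau :: "nat \<Rightarrow> nat" where
  "tau n = (if int n \<in> R 2 0 then nat \<lfloor>phi * real n + 1\<rfloor>
            else if int n \<in> R 1 0 then nat \<lfloor>phi * real n - 1\<rfloor>
            else nat \<lfloor>(phi - 1) * real n + 1\<rfloor>)"

end

theory Submission imports Defs "HOL-Computational_Algebra.Primes" begin

lemma no_sol: "(m::int)^2 = 5*k^2 \<Longrightarrow> k = 0"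
proof (induction "nat \<bar>k\<bar>" arbitrary: m k rule: less_induct)
  case less
  have p5: "prime (5::int)" by simp
  have "5 dvd m^2" using less.prems by simp
  hence "5 dvd m" using p5 prime_dvd_power by blast
  then obtain a where a: "m = 5*a" by blast
  hence "k^2 = 5*a^2" using less.prems by (simp add: power_mult_distrib)
  hence "5 dvd k^2" by simp
  hence "5 dvd k" using p5 prime_dvd_power by blast
  then obtain b where b: "k = 5*b" by blast
  hence ab: "a^2 = 5*b^2" using \<open>k^2 = 5*a^2\<close> by (simp add: power_mult_distrib)
  show "k = 0"
  proof (rule ccontr)
    assume "k \<noteq> 0"
    hence "nat \<bar>b\<bar> < nat \<bar>k\<bar>" using b by auto
    hence "b = 0" using less.hyps ab by blast
    thus False using b \<open>k \<noteq> 0\<close> by simp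
  qed
qed

lemma phi_sq: "phi^2 = phi + 1"
  unfolding phi_def by (simp add: power2_eq_square field_simps)

lemma phi_bounds: "1.6 < phi" "phi < 1.7"
proof -
  have "sqrt (2.2^2) < sqrt 5" "sqrt 5 < sqrt (2.4^2)" by (subst real_sqrt_less_iff; simp add: power2_eq_square)+
  hence "2.2 < sqrt 5" "sqrt 5 < 2.4" by simp_all
  thus "1.6 < phi" "phi < 1.7" unfolding phi_def by auto
qed

lemma nonint: assumes "(k::int) \<noteq> 0" shows "real_of_int k * phi \<noteq> of_int j"
proof
  assume h: "real_of_int k * phi = of_int j"
  hence "real_of_int k * sqrt 5 = of_int (2*j - k)" unfolding phi_def by (simp add: field_simps)
  hence "(real_of_int k * sqrt 5)^2 = of_int ((2*j-k)^2)" by simp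
  hence "of_int (5*k^2) = (of_int ((2*j-k)^2) :: real)" by (simp add: power_mult_distrib)
  hence "(2*j-k)^2 = 5*k^2" using of_int_eq_iff by metis
  thus False using no_sol assms by blast
qed

lemma frac_pos: assumes "(k::int) \<noteq> 0" shows "real_of_int \<lfloor>of_int k * phi\<rfloor> < of_int k * phi"
  using nonint[OF assms] of_int_floor_le by (metis less_eq_real_def)

lemma keyA: assumes "(k::int) \<ge> 1"
  shows "\<lfloor>of_int \<lfloor>of_int k * phi\<rfloor> * phi\<rfloor> = \<lfloor>of_int k * phi\<rfloor> + k - 1"
proof -
  define a where "a = \<lfloor>of_int k * phi\<rfloor>"
  define f where "f = of_int k * phi - of_int a"
  have f0: "0 < f" using frac_pos[of k] assms unfolding f_def a_def by simp
  have f1: "f < 1" unfolding f_def a_def by linarith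
  have aa: "of_int a = of_int k * phi - f" by (simp add: f_def)
  have pp: "phi * phi = phi + 1" using phi_sq by (simp add: power2_eq_square)
  have "of_int a * phi = of_int k * (phi*phi) - f*phi" unfolding aa by (simp add: algebra_simps)
  also have "... = of_int k*(phi+1) - f*phi" using pp by simp
  finally have e: "of_int a * phi = of_int a + of_int k - f * (phi - 1)"
    unfolding aa by (simp add: algebra_simps)
  have c0: "0 < phi - 1" using phi_bounds by simp
  have "f * (phi - 1) < (phi - 1)" using mult_strict_right_mono[OF f1 c0] by simp
  hence "f * (phi - 1) < 1" using phi_bounds by linarith
  moreover have "0 < f * (phi - 1)" using f0 c0 by simp
  ultimately have "0 < f * (phi - 1)" "f * (phi - 1) < 1" by auto
  hence "\<lfloor>of_int a * phi\<rfloor> = a + k - 1" unfolding e by (intro floor_unique) auto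
  thus ?thesis unfolding a_def .
qed

lemma keyB: assumes "(k::int) \<ge> 1"
  shows "\<lfloor>of_int (\<lfloor>of_int k * phi\<rfloor> + k) * phi\<rfloor> = 2 * \<lfloor>of_int k * phi\<rfloor> + k"
proof -
  define a where "a = \<lfloor>of_int k * phi\<rfloor>"
  define f where "f = of_int k * phi - of_int a"
  have f0: "0 < f" using frac_pos[of k] assms unfolding f_def a_def by simp
  have f1: "f < 1" unfolding f_def a_def by linarith
  have aa: "of_int a = of_int k * phi - f" by (simp add: f_def)
  have pp: "phi * phi = phi + 1" using phi_sq by (simp add: power2_eq_square)
  have "of_int (a + k) * phi = of_int k * (phi*phi) - f*phi + of_int k * phi" unfolding of_int_add aa by (simp add: algebra_simps)
  also have "... = of_int k*(phi+1) - f*phi + of_int k * phi" using pp by simp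
  finally have e: "of_int (a + k) * phi = 2 * of_int a + of_int k + f * (2 - phi)"
    unfolding aa by (simp add: algebra_simps)
  have c0: "0 < 2 - phi" using phi_bounds by simp
  have "f * (2 - phi) < (2 - phi)" using mult_strict_right_mono[OF f1 c0] by simp
  hence "f * (2 - phi) < 1" using phi_bounds by linarith
  moreover have "0 < f * (2 - phi)" using f0 c0 by simp
  ultimately have "0 < f * (2 - phi)" "f * (2 - phi) < 1" by auto
  hence "\<lfloor>of_int (a + k) * phi\<rfloor> = 2 * a + k" unfolding e by (intro floor_unique) auto
  thus ?thesis unfolding a_def .
qed

lemma disj: assumes "(p::int) \<ge> 1" "(q::int) \<ge> 1"
  shows "\<lfloor>of_int p * phi\<rfloor> \<noteq> \<lfloor>of_int q * phi\<rfloor> + q"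
proof
  assume h: "\<lfloor>of_int p * phi\<rfloor> = \<lfloor>of_int q * phi\<rfloor> + q"
  define N where "N = \<lfloor>of_int p * phi\<rfloor>"
  have p1: "of_int N < of_int p * phi" using frac_pos[of p] assms unfolding N_def by simp
  have p2: "of_int p * phi < of_int N + 1" unfolding N_def by linarith
  have q1: "of_int N < of_int q * (phi + 1)" using frac_pos[of q] assms h unfolding N_def
    by (simp add: algebra_simps)
  have q2: "of_int q * (phi+1) < of_int N + 1" using h unfolding N_def
    by (simp add: algebra_simps) linarith
  have pp: "phi > 0" using phi_bounds by simp
  have r: "1/phi + 1/(phi+1) = 1" using phi_sq pp by (simp add: field_simps power2_eq_square)
  have "of_int N / phi < of_int p" "of_int p < (of_int N + 1) / phi"
    using p1 p2 pp by (simp_all add: field_simps)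
  moreover have "of_int N / (phi+1) < of_int q" "of_int q < (of_int N + 1) / (phi+1)"
    using q1 q2 pp by (simp_all add: field_simps)
  moreover have "of_int N / phi + of_int N/(phi+1) = of_int N * (1/phi + 1/(phi+1))"
    by (simp add: divide_inverse distrib_left)
  moreover have "(of_int N + 1) / phi + (of_int N + 1)/(phi+1) = (of_int N + 1) * (1/phi + 1/(phi+1))"
    by (simp only: divide_inverse distrib_left mult_1_right)
  ultimately have "of_int N < real_of_int (p + q)" "real_of_int (p + q) < of_int N + 1"
    unfolding r by simp_all
  hence "N < p + q" "p + q < N + 1"
    by (metis of_int_less_iff, metis of_int_1 of_int_add of_int_less_iff)
  thus False by linarith
qed

lemma R10_iff: "x \<in> R 1 0 \<longleftrightarrow> (\<exists>k::int. k \<ge> 1 \<and> x = \<lfloor>of_int k * phi\<rfloor> + k)"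
proof
  assume "x \<in> R 1 0"
  then obtain n :: nat where "n \<ge> 1" "x = \<lfloor>real n * phi\<rfloor> + int n"
    unfolding R_def by (auto simp: numeral_2_eq_2)
  thus "\<exists>k::int. k \<ge> 1 \<and> x = \<lfloor>of_int k * phi\<rfloor> + k"
    by (intro exI[of _ "int n"]) auto
next
  assume "\<exists>k::int. k \<ge> 1 \<and> x = \<lfloor>of_int k * phi\<rfloor> + k"
  then obtain k :: int where k: "k \<ge> 1" "x = \<lfloor>of_int k * phi\<rfloor> + k" by blast
  have "x = int (fib (1+1)) * \<lfloor>real (nat k) * phi\<rfloor> + int (fib 1) * int (nat k) - 0"
    using k by (simp add: numeral_2_eq_2)
  moreover have "nat k \<ge> 1" using k by simp
  ultimately show "x \<in> R 1 0" unfolding R_def by blast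
qed

lemma R20_iff: "x \<in> R 2 0 \<longleftrightarrow> (\<exists>k::int. k \<ge> 1 \<and> x = 2 * \<lfloor>of_int k * phi\<rfloor> + k)"
proof
  assume "x \<in> R 2 0"
  then obtain n :: nat where "n \<ge> 1" "x = 2 * \<lfloor>real n * phi\<rfloor> + int n"
    unfolding R_def by (auto simp: numeral_3_eq_3 numeral_2_eq_2)
  thus "\<exists>k::int. k \<ge> 1 \<and> x = 2 * \<lfloor>of_int k * phi\<rfloor> + k"
    by (intro exI[of _ "int n"]) auto
next
  assume "\<exists>k::int. k \<ge> 1 \<and> x = 2 * \<lfloor>of_int k * phi\<rfloor> + k"
  then obtain k :: int where k: "k \<ge> 1" "x = 2 * \<lfloor>of_int k * phi\<rfloor> + k" by blast
  have "x = int (fib (2+1)) * \<lfloor>real (nat k) * phi\<rfloor> + int (fib 2) * int (nat k) - 0"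
    using k by (simp add: numeral_3_eq_3 numeral_2_eq_2)
  moreover have "nat k \<ge> 1" using k by simp
  ultimately show "x \<in> R 2 0" unfolding R_def by blast
qed

lemma A_ge1: assumes "(k::int) \<ge> 1" shows "\<lfloor>of_int k * phi\<rfloor> \<ge> 1"
proof -
  have "real_of_int k * phi \<ge> 1 * 1" using assms phi_bounds by (intro mult_mono) auto
  thus ?thesis by linarith
qed

lemma step:
  assumes "(k::int) \<ge> 1" "int n = \<lfloor>of_int k * phi\<rfloor> + k"
  shows "int (tau n) = \<lfloor>of_int \<lfloor>of_int k * phi\<rfloor> * phi\<rfloor> + \<lfloor>of_int k * phi\<rfloor>"
proof -
  define a where "a = \<lfloor>of_int k * phi\<rfloor>"
  have a1: "a \<ge> 1" using A_ge1[OF assms(1)] a_def by simp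
  have in1: "int n \<in> R 1 0" using assms R10_iff by blast
  have nin2: "int n \<notin> R 2 0"
  proof
    assume "int n \<in> R 2 0"
    then obtain j :: int where j: "j \<ge> 1" "int n = 2 * \<lfloor>of_int j * phi\<rfloor> + j"
      using R20_iff by blast
    have "\<lfloor>of_int (\<lfloor>of_int j * phi\<rfloor> + j) * phi\<rfloor> = \<lfloor>of_int k * phi\<rfloor> + k"
      using keyB[OF j(1)] j(2) assms(2) by simp
    moreover have "\<lfloor>of_int j * phi\<rfloor> + j \<ge> 1" using A_ge1[OF j(1)] j by simp
    ultimately show False using disj assms(1) by blast
  qed
  have "tau n = nat \<lfloor>phi * real n - 1\<rfloor>" unfolding tau_def using in1 nin2 by simp
  moreover have "phi * real n = of_int (a + k) * phi"
    using assms(2) unfolding a_def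
    by (metis mult.commute of_int_of_nat_eq)
  moreover have "\<lfloor>of_int (a + k) * phi\<rfloor> = 2 * a + k" using keyB[OF assms(1)] a_def by simp
  moreover have "\<lfloor>of_int a * phi\<rfloor> = a + k - 1" using keyA[OF assms(1)] a_def by simp
  ultimately show ?thesis using a1 assms(1) unfolding a_def[symmetric] by simp
qed

theorem lemma4p6:
  fixes n :: nat
  assumes "int n \<in> R 1 0"
  shows "int (tau n) \<in> R 1 0 \<and>
         int ((tau ^^ 3) n) = int ((tau ^^ 2) n) + int (tau n) - 2"
proof -
  obtain k0 :: int where k0: "k0 \<ge> 1" "int n = \<lfloor>of_int k0 * phi\<rfloor> + k0"
    using assms R10_iff by blast
  define k1 where "k1 = \<lfloor>of_int k0 * phi\<rfloor>"
  define k2 where "k2 = \<lfloor>of_int k1 * phi\<rfloor>"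
  define k3 where "k3 = \<lfloor>of_int k2 * phi\<rfloor>"
  have g1: "k1 \<ge> 1" "k2 \<ge> 1" using A_ge1 k0(1) k1_def k2_def by auto
  have t1: "int (tau n) = \<lfloor>of_int k1 * phi\<rfloor> + k1" using step[OF k0] k1_def by simp
  have t2: "int (tau (tau n)) = \<lfloor>of_int k2 * phi\<rfloor> + k2"
    using step[OF g1(1) t1] k2_def by simp
  have t3: "int (tau (tau (tau n))) = \<lfloor>of_int k3 * phi\<rfloor> + k3"
    using step[OF g1(2) t2] k3_def by simp
  have e1: "k2 = k1 + k0 - 1" using keyA[OF k0(1)] k1_def k2_def by simp
  have e2: "k3 = k2 + k1 - 1" using keyA[OF g1(1)] k2_def k3_def by simp
  have e3: "\<lfloor>of_int k3 * phi\<rfloor> = k3 + k2 - 1" using keyA[OF g1(2)] k3_def by simp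
  have "int (tau n) \<in> R 1 0" using t1 g1 R10_iff by blast
  moreover have "(tau ^^ 3) n = tau (tau (tau n))" "(tau ^^ 2) n = tau (tau n)"
    by (simp_all add: numeral_3_eq_3 numeral_2_eq_2)
  moreover have "int (tau (tau (tau n))) = int (tau (tau n)) + int (tau n) - 2"
    using t1 t2 t3 e2 e3 k2_def[symmetric] k3_def[symmetric] by linarith
  ultimately show ?thesis by simp
qed

end
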